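(* Let $k>0$, let $Q\subset\mathbb{R}^2$ be a bounded open set with smooth boundary and connected exterior, let $\theta_1,\dots,\theta_N\in\mathbb{S}^1$, and let $u^\infty_{\theta_1},\dots,u^\infty_{\theta_N}\in L^2(\mathbb{S}^1)$ be given data. Let $R:L^2(\mathbb{S}^1)\to L^2(\mathbb{S}^1)$ be a bounded, self-adjoint, positive definite, invertible linear operator. Let $q_0\in L^2(Q)$ be an initial guess and $\{\alpha_i\}_{i\in\mathbb{N}_0}$ a sequence of positive regularization parameters. Define the Full data Levenberg–Marquardt (FLM) iterates by $q^{FLM}_0:=q_0$ and, for $i\in\mathbb{N}_0$, $$q^{FLM}_{i+1}=q^{FLM}_i+\Big(\alpha_i I+\vec{\mathcal{F}}'[q^{FLM}_i]^H R^{-1}\vec{\mathcal{F}}'[q^{FLM}_i]\Big)^{-1}\vec{\mathcal{F}}'[q^{FLM}_i]^H R^{-1}\Big(\vec u^\infty-\vec{\mathcal{F}}q^{FLM}_i\Big),$$ where $\vec u^\infty:=(u^\infty_{\theta_1},\dots,u^\infty_{\theta_N})$, $\vec{\mathcal{F}}q:=(\mathcal{F}_{\theta_1}q,\dots,\mathcal{F}_{\theta_N}q)$, $\vec{\mathcal{F}}'[q]m:=(\mathcal{F}'_{\theta_1}[q]m,\dots,\mathcal{F}'_{\theta_N}[q]m)$, and $R^{-1}$ acts componentwise on $L^2(\mathbb{S}^1)^N$. Define the Kalman filter Levenberg–Marquardt (KFL) iterates as follows: $q^{KFL}_{0,0}:=q_0$; for $i\ge 1$, $q^{KFL}_{i,0}:=q^{KFL}_{i-1,N}$;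 for every $i\in\mathbb{N}_0$, $B_{i,0}:=\frac{1}{\alpha_i}I$, and for $n=1,\dots,N$, $$K_{i,n}:=B_{i,n-1}\mathcal{F}'_{\theta_n}[q^{KFL}_{i,0}]^H\Big(R+\mathcal{F}'_{\theta_n}[q^{KFL}_{i,0}]B_{i,n-1}\mathcal{F}'_{\theta_n}[q^{KFL}_{i,0}]^H\Big)^{-1},$$ $$q^{KFL}_{i,n}:=q^{KFL}_{i,n-1}+K_{i,n}\Big(u^\infty_{\theta_n}-\mathcal{F}_{\theta_n}q^{KFL}_{i,0}+\mathcal{F}'_{\theta_n}[q^{KFL}_{i,0}]q^{KFL}_{i,0}-\mathcal{F}'_{\theta_n}[q^{KFL}_{i,0}]q^{KFL}_{i,n-1}\Big),$$ $$B_{i,n}:=\Big(I-K_{i,n}\mathcal{F}'_{\theta_n}[q^{KFL}_{i,0}]\Big)B_{i,n-1}.$$ Then, for all $i\in\mathbb{N}_0$ (with both iterations well defined, i.e. the relevant iterates lie in the domain where the Fréchet derivatives exist), $q^{KFL}_{i,N}=q^{FLM}_{i+1}$.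
   Context: For an incident direction $\theta\in\mathbb{S}^1$, the plane wave is $u^{inc}(x,\theta)=e^{ikx\cdot\theta}$. For $q\in L^\infty(Q)$ (extended by zero outside $Q$), $u_q(\cdot,\theta)$ denotes the solution of the Lippmann–Schwinger equation $u(x,\theta)=u^{inc}(x,\theta)+k^2\int_Q q(y)u(y,\theta)\Phi(x,y)\,dy$, where $\Phi(x,y)=\frac{i}{4}H^{(1)}_0(k|x-y|)$ is the fundamental solution of the Helmholtz equation in $\mathbb{R}^2$. The far-field mapping is $\mathcal{F}_\theta q(\hat x):=\frac{k^2e^{i\pi/4}}{\sqrt{8\pi k}}\int_Q e^{-ik\hat x\cdot y}u_q(y,\theta)q(y)\,dy$, $\hat x\in\mathbb{S}^1$. On $L^\infty_+(Q):=\{q\in L^\infty(Q):\exists q_0>0,\ \mathrm{Im}\,q\ge q_0\text{ a.e. on }Q\}\subset L^2(Q)$, $\mathcal{F}_\theta$ is Fréchet differentiable as a map into $L^2(\mathbb{S}^1)$, with derivative $\mathcal{F}'_\theta[q]:L^2(Q)\to L^2(\mathbb{S}^1)$ given by $\mathcal{F}'_\theta[q]m=v^\infty_{q,m}$, the far-field pattern of the radiating solution $v$ of $\Delta v+k^2(1+q)v=-k^2 m\,u_q(\cdot,\theta)$ in $\mathbb{R}^2$. The superscript $H$ denotes the Hilbert-space adjoint with respect to the standard $L^2$ inner products of $L^2(Q)$, $L^2(\mathbb{S}^1)$ and $L^2(\mathbb{S}^1)^N$. *)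

theory Defs
  imports "HOL-Analysis.Analysis"
begin

text \<open>Abstract Hilbert-space setting: 'x plays L2(Q), 'y plays L2(S1).
  F n : the far-field map for direction theta_n, DF n q : its Frechet derivative at q,
  u n : data for direction theta_n, R : covariance operator on 'y.\<close>

text \<open>One Full-data Levenberg--Marquardt step. The adjoint of the stacked
  derivative w.r.t. the product inner product of L2(S1)^N is written out
  as the sum of the componentwise adjoints.\<close>
definition FLM_step ::
  "(nat \<Rightarrow> 'x::{real_inner,complete_space} \<Rightarrow> 'y::{real_inner,complete_space})
   \<Rightarrow> (nat \<Rightarrow> 'x \<Rightarrow> 'x \<Rightarrow> 'y) \<Rightarrow> ('y \<Rightarrow> 'y) \<Rightarrow> (nat \<Rightarrow> 'y) \<Rightarrow> nat
   \<Rightarrow> real \<Rightarrow> 'x \<Rightarrow> 'x" where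
  "FLM_step F DF R u N a q =
     q + inv (\<lambda>m. a *\<^sub>R m + (\<Sum>n = 1..N. adjoint (DF n q) (inv R (DF n q m))))
             (\<Sum>n = 1..N. adjoint (DF n q) (inv R (u n - F n q)))"

fun FLM :: "(nat \<Rightarrow> 'x::{real_inner,complete_space} \<Rightarrow> 'y::{real_inner,complete_space})
   \<Rightarrow> (nat \<Rightarrow> 'x \<Rightarrow> 'x \<Rightarrow> 'y) \<Rightarrow> ('y \<Rightarrow> 'y) \<Rightarrow> (nat \<Rightarrow> 'y) \<Rightarrow> nat
   \<Rightarrow> (nat \<Rightarrow> real) \<Rightarrow> 'x \<Rightarrow> nat \<Rightarrow> 'x" where
  "FLM F DF R u N alpha q0 0 = q0"
| "FLM F DF R u N alpha q0 (Suc i) = FLM_step F DF R u N (alpha i) (FLM F DF R u N alpha q0 i)"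

text \<open>Inner Kalman sweep of outer step i: given a = alpha_i and the linearisation
  point qb = q_{i,0}, returns (q_{i,n}, B_{i,n}).\<close>
fun KFL_inner :: "(nat \<Rightarrow> 'x::{real_inner,complete_space} \<Rightarrow> 'y::{real_inner,complete_space})
   \<Rightarrow> (nat \<Rightarrow> 'x \<Rightarrow> 'x \<Rightarrow> 'y) \<Rightarrow> ('y \<Rightarrow> 'y) \<Rightarrow> (nat \<Rightarrow> 'y)
   \<Rightarrow> real \<Rightarrow> 'x \<Rightarrow> nat \<Rightarrow> 'x \<times> ('x \<Rightarrow> 'x)" where
  "KFL_inner F DF R u a qb 0 = (qb, \<lambda>m. (1 / a) *\<^sub>R m)"
| "KFL_inner F DF R u a qb (Suc n) =
     (let (q, B) = KFL_inner F DF R u a qb n;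
          A = DF (Suc n) qb;
          K = (\<lambda>y. B (adjoint A (inv (\<lambda>z. R z + A (B (adjoint A z))) y)))
      in (q + K (u (Suc n) - F (Suc n) qb + A qb - A q),
          \<lambda>m. B m - K (A (B m))))"

fun KFL_start :: "(nat \<Rightarrow> 'x::{real_inner,complete_space} \<Rightarrow> 'y::{real_inner,complete_space})
   \<Rightarrow> (nat \<Rightarrow> 'x \<Rightarrow> 'x \<Rightarrow> 'y) \<Rightarrow> ('y \<Rightarrow> 'y) \<Rightarrow> (nat \<Rightarrow> 'y) \<Rightarrow> nat
   \<Rightarrow> (nat \<Rightarrow> real) \<Rightarrow> 'x \<Rightarrow> nat \<Rightarrow> 'x" where
  "KFL_start F DF R u N alpha q0 0 = q0"
| "KFL_start F DF R u N alpha q0 (Suc i) =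
     fst (KFL_inner F DF R u (alpha i) (KFL_start F DF R u N alpha q0 i) N)"

definition KFL_q :: "(nat \<Rightarrow> 'x::{real_inner,complete_space} \<Rightarrow> 'y::{real_inner,complete_space})
   \<Rightarrow> (nat \<Rightarrow> 'x \<Rightarrow> 'x \<Rightarrow> 'y) \<Rightarrow> ('y \<Rightarrow> 'y) \<Rightarrow> (nat \<Rightarrow> 'y) \<Rightarrow> nat
   \<Rightarrow> (nat \<Rightarrow> real) \<Rightarrow> 'x \<Rightarrow> nat \<Rightarrow> nat \<Rightarrow> 'x" where
  "KFL_q F DF R u N alpha q0 i n =
     fst (KFL_inner F DF R u (alpha i) (KFL_start F DF R u N alpha q0 i) n)"

end

theory Submission
  imports Defs
begin

lemma inner_eq_right:
  fixes a b :: "'a::real_inner"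
  assumes "\<And>x. x \<bullet> a = x \<bullet> b" shows "a = b"
proof -
  have "(a - b) \<bullet> (a - b) = 0" using assms[of "a - b"] by (simp add: inner_diff_right)
  then show ?thesis by simp
qed

lemma lax_milgram:
  fixes T :: "'a::{real_inner,complete_space} \<Rightarrow> 'a" and l :: "'a \<Rightarrow> real"
  assumes T: "bounded_linear T" and sym: "\<And>x z. T x \<bullet> z = x \<bullet> T z"
    and c: "c > 0" and coer: "\<And>x. c * (norm x)^2 \<le> T x \<bullet> x"
    and l: "bounded_linear l"
  shows "\<exists>x. \<forall>z. T x \<bullet> z = l z"
proof -
  interpret T: bounded_linear T by fact
  interpret l: bounded_linear l by fact
  have sym2: "T b \<bullet> a = T a \<bullet> b" for a b by (metis sym inner_commute)
  define J where "J x = T x \<bullet> x - 2 * l x" for x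
  obtain L where L: "L > 0" "\<And>x. norm (l x) \<le> norm x * L" using l.pos_bounded by blast
  have lb: "- (L^2 / c) \<le> J x" for x
  proof -
    have lx: "l x \<le> norm x * L" using L(2)[of x] by auto
    have "0 \<le> (c * norm x - L)^2 / c" using c by simp
    also have "\<dots> = c * (norm x)^2 - 2 * L * norm x + L^2/c" using c
      by (simp add: field_simps power2_eq_square)
    finally show ?thesis using coer[of x] lx unfolding J_def by (simp add: algebra_simps)
  qed
  define d where "d = Inf (range J)"
  have bdd: "bdd_below (range J)" unfolding bdd_below_def using lb by blast
  have dle: "d \<le> J x" for x unfolding d_def using bdd by (simp add: cInf_lower)
  have ex: "\<exists>x. J x < d + e" if "e > 0" for e
  proof (rule ccontr)
    assume "\<not> ?thesis"
    then have "d + e \<le> J x" for x by (simp add: not_less)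
    then have "d + e \<le> d" unfolding d_def by (intro cInf_greatest) auto
    with that show False by simp
  qed
  have "\<forall>k. \<exists>x. J x < d + 1 / real (Suc k)" using ex by simp
  then obtain xs where xs: "\<And>k. J (xs k) < d + 1 / real (Suc k)" by metis
  have par: "J a + J b - 2 * J ((1/2) *\<^sub>R (a+b)) = (1/2) * (T (a-b) \<bullet> (a-b))" for a b
    unfolding J_def by (simp add: T.add T.diff T.scaleR l.add l.scaleR inner_add_left
        inner_add_right inner_diff_left inner_diff_right sym2[of a b] algebra_simps)
  have est: "c * (norm (xs j - xs k))^2 \<le> 2 / real (Suc j) + 2 / real (Suc k)" for j k
  proof -
    have "c * (norm (xs j - xs k))^2 \<le> T (xs j - xs k) \<bullet> (xs j - xs k)" by (rule coer)
    also have "\<dots> = 2 * (J (xs j) + J (xs k) - 2 * J ((1/2) *\<^sub>R (xs j + xs k)))"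
      using par[of "xs j" "xs k"] by simp
    also have "\<dots> \<le> 2 / real (Suc j) + 2 / real (Suc k)"
      using xs[of j] xs[of k] dle[of "(1/2) *\<^sub>R (xs j + xs k)"] by simp
    finally show ?thesis .
  qed
  have "Cauchy xs"
  proof (rule CauchyI)
    fix e :: real assume e: "e > 0"
    obtain M :: nat where M: "4 / (c * e^2) < real M" using reals_Archimedean2 by blast
    have "norm (xs m - xs n) < e" if "m \<ge> M" "n \<ge> M" for m n
    proof -
      have pos: "c * e^2 > 0" using c e by simp
      have "2 / real (Suc m) \<le> 2 / real (Suc M)" using that by (simp add: frac_le)
      moreover have "2 / real (Suc n) \<le> 2 / real (Suc M)" using that by (simp add: frac_le)
      moreover have "4 / real (Suc M) < c * e^2"
        using M pos by (simp add: field_simps)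
      ultimately have "c * (norm (xs m - xs n))^2 < c * e^2" using est[of m n] by linarith
      then have "(norm (xs m - xs n))^2 < e^2" using c by simp
      then show ?thesis using e by (simp add: power_less_imp_less_base)
    qed
    then show "\<exists>M. \<forall>m\<ge>M. \<forall>n\<ge>M. norm (xs m - xs n) < e" by blast
  qed
  then obtain x where x: "xs \<longlonglongrightarrow> x" using Cauchy_convergent_iff convergent_def by blast
  have lim1: "(\<lambda>k. J (xs k)) \<longlonglongrightarrow> J x" unfolding J_def
    by (intro tendsto_intros T.tendsto l.tendsto x)
  have lim2: "(\<lambda>k. d + 1 / real (Suc k)) \<longlonglongrightarrow> d"
    using tendsto_add[OF tendsto_const LIMSEQ_Suc[OF lim_1_over_n]] by simp
  have Jx: "J x \<le> d"
    by (rule tendsto_le[OF trivial_limit_sequentially lim2 lim1]) (use xs less_imp_le in \<open>auto intro: always_eventually\<close>)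
  show ?thesis
  proof (intro exI allI)
    fix z
    define g where "g = T x \<bullet> z - l z"
    define h where "h = T z \<bullet> z"
    have h0: "h \<ge> 0" unfolding h_def using coer[of z] c by (smt (verit) mult_nonneg_nonneg zero_le_power2)
    have expn: "J (x + t *\<^sub>R z) = J x + 2*t*g + t^2*h" for t
      unfolding J_def g_def h_def
      by (simp add: T.add T.scaleR l.add l.scaleR inner_add_left inner_add_right sym2[of x z]
          algebra_simps power2_eq_square)
    show "T x \<bullet> z = l z"
    proof (rule ccontr)
      assume "T x \<bullet> z \<noteq> l z"
      then have g0: "g \<noteq> 0" unfolding g_def by simp
      define t where "t = - g / (h + 1)"
      have "J x \<le> J (x + t *\<^sub>R z)" using Jx dle by (meson order_trans)
      then have ge: "0 \<le> 2*t*g + t^2*h" using expn by simp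
      have h1: "h + 1 > 0" using h0 by simp
      have th: "t * (h+1) = -g" unfolding t_def using h1 by simp
      have "(2*t*g + t^2*h) * (h+1)^2 = 2*g*(t*(h+1))*(h+1) + h*(t*(h+1))^2"
        by (simp add: algebra_simps power2_eq_square)
      also have "\<dots> = - (g^2 * (h + 2))" unfolding th by (simp add: algebra_simps power2_eq_square)
      also have "\<dots> < 0" using g0 h0 by (simp add: add_nonneg_pos)
      finally have "(2*t*g + t^2*h) * (h+1)^2 < 0" .
      moreover have "(h+1)^2 > 0" using h1 by simp
      ultimately have "2*t*g + t^2*h < 0" by (simp add: mult_less_0_iff)
      with ge show False by simp
    qed
  qed
qed


lemma adjoint_hilbert:
  fixes f :: "'a::{real_inner,complete_space} \<Rightarrow> 'b::real_inner"
  assumes f: "bounded_linear f"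
  shows "f x \<bullet> y = x \<bullet> adjoint f y"
proof -
  have "\<exists>g. \<forall>z. (\<lambda>x. x) g \<bullet> z = f z \<bullet> y" for y
    by (rule lax_milgram[where c=1])
       (auto simp: power2_norm_eq_inner intro: bounded_linear_compose[OF bounded_linear_inner_left f])
  then obtain g where g: "\<And>y z. g y \<bullet> z = f z \<bullet> y" by metis
  then have "\<forall>x y. f x \<bullet> y = x \<bullet> g y" by (simp add: inner_commute)
  then have "\<forall>x y. f x \<bullet> y = x \<bullet> adjoint f y"
    unfolding adjoint_def by (rule someI[where P="\<lambda>f'. \<forall>x y. f x \<bullet> y = x \<bullet> f' y"])
  then show ?thesis by blast
qed

lemma adjoint_bounded_linear:
  fixes f :: "'a::{real_inner,complete_space} \<Rightarrow> 'b::real_inner"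
  assumes f: "bounded_linear f"
  shows "bounded_linear (adjoint f)"
proof -
  interpret f: bounded_linear f by fact
  obtain K where K: "K > 0" "\<And>x. norm (f x) \<le> norm x * K" using f.pos_bounded by blast
  note aw = adjoint_hilbert[OF f]
  show ?thesis
  proof (rule bounded_linear_intro[where K=K])
    fix y1 y2
    show "adjoint f (y1 + y2) = adjoint f y1 + adjoint f y2"
      by (rule inner_eq_right) (simp add: inner_add_right flip: aw)
  next
    fix r y
    show "adjoint f (r *\<^sub>R y) = r *\<^sub>R adjoint f y"
      by (rule inner_eq_right) (simp flip: aw)
  next
    fix y
    have "(norm (adjoint f y))^2 = f (adjoint f y) \<bullet> y"
      by (simp add: aw power2_norm_eq_inner)
    also have "\<dots> \<le> norm (f (adjoint f y)) * norm y" by (rule norm_cauchy_schwarz)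
    also have "\<dots> \<le> norm (adjoint f y) * K * norm y" using K(2) by (simp add: mult_right_mono)
    finally have *: "(norm (adjoint f y))^2 \<le> norm (adjoint f y) * (norm y * K)" by (simp add: algebra_simps)
    show "norm (adjoint f y) \<le> norm y * K"
    proof (cases "norm (adjoint f y) = 0")
      case True then show ?thesis using K by simp
    next
      case False
      then have "norm (adjoint f y) > 0" by simp
      with * show ?thesis by (simp add: power2_eq_square)
    qed
  qed
qed

lemma coercive_surj:
  fixes T :: "'a::{real_inner,complete_space} \<Rightarrow> 'a"
  assumes T: "bounded_linear T" and sym: "\<And>x z. T x \<bullet> z = x \<bullet> T z"
    and c: "c > 0" and coer: "\<And>x. c * (norm x)^2 \<le> T x \<bullet> x"
  shows "surj T"
proof -
  have "\<exists>x. T x = y" for y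
  proof -
    have "\<exists>x. \<forall>z. T x \<bullet> z = y \<bullet> z"
      by (rule lax_milgram[OF T sym c coer bounded_linear_inner_right])
    then obtain x where x: "\<forall>z. T x \<bullet> z = y \<bullet> z" by blast
    have "T x = y" 
    proof (rule inner_eq_right)
      fix z show "z \<bullet> T x = z \<bullet> y" using x[rule_format, of z] by (simp only: inner_commute)
    qed
    then show ?thesis by blast
  qed
  then show ?thesis by (metis surj_def)
qed
lemma coercive_inj:
  fixes T :: "'a::real_inner \<Rightarrow> 'a"
  assumes T: "linear T" and c: "c > 0" and coer: "\<And>x. c * (norm x)^2 \<le> T x \<bullet> x"
  shows "inj T"
proof (rule injI)
  interpret T: linear T by fact
  fix x y assume "T x = T y"
  then have "T (x - y) = 0" by (simp add: T.diff)
  then have "c * (norm (x - y))^2 \<le> 0" using coer[of "x - y"] by simp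
  with c have "norm (x - y) = 0"
    by (smt (verit) mult_pos_pos zero_less_power2 norm_ge_zero)
  then show "x = y" by simp
qed


lemma kalman_step:
  fixes H :: "'x::real_vector \<Rightarrow> 'x" and A :: "'x \<Rightarrow> 'y::real_vector"
    and At :: "'y \<Rightarrow> 'x" and R Ri :: "'y \<Rightarrow> 'y" and B :: "'x \<Rightarrow> 'x"
  assumes H: "linear H" and A: "linear A" and At: "linear At" and Ri: "linear Ri"
    and RiR: "\<And>z. Ri (R z) = z" and RRi: "\<And>z. R (Ri z) = z"
    and injH: "inj H" and surjH': "surj (\<lambda>m. H m + At (Ri (A m)))" and HB: "\<And>v. H (B v) = v"
  defines "K \<equiv> \<lambda>y. B (At (inv (\<lambda>z. R z + A (B (At z))) y))"
  shows "H (B m - K (A (B m))) + At (Ri (A (B m - K (A (B m))))) = m"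
    and "H (d + K (r - A d)) + At (Ri (A (d + K (r - A d)))) = H d + At (Ri r)"
proof -
  interpret H: linear H by fact
  interpret A: linear A by fact
  interpret At: linear At by fact
  interpret Ri: linear Ri by fact
  define S where "S = (\<lambda>z. R z + A (B (At z)))"
  have BH: "B (H v) = v" for v using injH HB by (metis injD)
  have "surj S"
  proof -
    have "\<exists>y. S y = w" for w
    proof -
      define x where "x = inv (\<lambda>m. H m + At (Ri (A m))) (At (Ri w))"
      have hx: "H x + At (Ri (A x)) = At (Ri w)"
        unfolding x_def using surjH' by (rule surj_f_inv_f)
      have e1: "At (Ri (w - A x)) = At (Ri w) - At (Ri (A x))" by (simp only: Ri.diff At.diff)
      have e2: "At (Ri w) - At (Ri (A x)) = H x" using hx[symmetric] by simp
      have "S (Ri (w - A x)) = (w - A x) + A (B (H x))" unfolding S_def e1 e2 RRi ..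
      also have "\<dots> = w" by (simp add: BH)
      finally show ?thesis ..
    qed
    then show ?thesis by (metis surj_def)
  qed
  then have SS: "S (inv S y) = y" for y by (rule surj_f_inv_f)
  have HK: "H (K y) + At (Ri (A (K y))) = At (Ri y)" for y
  proof -
    define z where "z = inv S y"
    have Kz: "K y = B (At z)" unfolding K_def z_def S_def ..
    have yz: "y = R z + A (B (At z))" using SS[of y] unfolding z_def S_def by simp
    have "At (Ri y) = At (Ri (R z)) + At (Ri (A (B (At z))))" unfolding yz by (simp only: Ri.add At.add)
    also have "\<dots> = H (B (At z)) + At (Ri (A (B (At z))))" by (simp only: RiR HB)
    finally show ?thesis unfolding Kz by simp
  qed
  have L1: "H (B m - K (A (B m))) + At (Ri (A (B m - K (A (B m)))))
      = (H (B m) + At (Ri (A (B m)))) - (H (K (A (B m))) + At (Ri (A (K (A (B m))))))"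
    by (simp only: H.diff A.diff Ri.diff At.diff) (simp add: algebra_simps)
  show "H (B m - K (A (B m))) + At (Ri (A (B m - K (A (B m))))) = m"
    unfolding L1 HK HB by simp
  have L2: "H (d + K (r - A d)) + At (Ri (A (d + K (r - A d))))
      = (H d + At (Ri (A d))) + (H (K (r - A d)) + At (Ri (A (K (r - A d)))))"
    by (simp only: H.add A.add Ri.add At.add) (simp add: algebra_simps)
  show "H (d + K (r - A d)) + At (Ri (A (d + K (r - A d)))) = H d + At (Ri r)"
    unfolding L2 HK by (simp add: Ri.diff At.diff)
qed
lemma Ri_facts:
  fixes R :: "'y::real_inner \<Rightarrow> 'y"
  assumes R_sa: "\<And>v w. R v \<bullet> w = v \<bullet> R w"
    and R_pos: "\<And>v. v \<noteq> 0 \<Longrightarrow> R v \<bullet> v > 0" and bij: "bij R"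
  shows "inv R (R z) = z" "R (inv R z) = z" "inv R v \<bullet> w = v \<bullet> inv R w" "0 \<le> inv R w \<bullet> w"
proof -
  show RiR: "inv R (R z) = z" for z using bij by (simp add: bij_is_inj)
  show RRi: "R (inv R z) = z" for z using bij by (simp add: bij_is_surj surj_f_inv_f)
  have "inv R v \<bullet> w = inv R v \<bullet> R (inv R w)" by (simp add: RRi)
  also have "\<dots> = R (inv R v) \<bullet> inv R w" by (simp add: R_sa)
  also have "\<dots> = v \<bullet> inv R w" by (simp add: RRi)
  finally show "inv R v \<bullet> w = v \<bullet> inv R w" .
  have "inv R w \<bullet> w = R (inv R w) \<bullet> inv R w" by (simp add: RRi inner_commute)
  also have "\<dots> \<ge> 0" using R_pos[of "inv R w"] by (cases "inv R w = 0") auto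
  finally show "0 \<le> inv R w \<bullet> w" .
qed

definition Hop :: "(nat \<Rightarrow> 'x::{real_inner,complete_space} \<Rightarrow> 'x \<Rightarrow> 'y::{real_inner,complete_space})
   \<Rightarrow> ('y \<Rightarrow> 'y) \<Rightarrow> real \<Rightarrow> 'x \<Rightarrow> nat \<Rightarrow> 'x \<Rightarrow> 'x" where
  "Hop DF R a qb n = (\<lambda>m. a *\<^sub>R m + (\<Sum>k = 1..n. adjoint (DF k qb) (inv R (DF k qb m))))"

lemma Hop_props:
  fixes DF :: "nat \<Rightarrow> 'x::{real_inner,complete_space} \<Rightarrow> 'x \<Rightarrow> 'y::{real_inner,complete_space}"
  assumes A_bl: "\<And>k. k \<in> {1..n} \<Longrightarrow> bounded_linear (DF k qb)"
    and R_sa: "\<And>v w. R v \<bullet> w = v \<bullet> R w"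
    and R_pos: "\<And>v. v \<noteq> 0 \<Longrightarrow> R v \<bullet> v > 0" and bij: "bij R"
    and Ri_bl: "bounded_linear (inv R)"
  shows "bounded_linear (Hop DF R a qb n)"
    and "\<And>x z. Hop DF R a qb n x \<bullet> z = x \<bullet> Hop DF R a qb n z"
    and "\<And>x. a * (norm x)^2 \<le> Hop DF R a qb n x \<bullet> x"
proof -
  note Rf = Ri_facts[OF R_sa R_pos bij]
  show "bounded_linear (Hop DF R a qb n)" unfolding Hop_def
    by (intro bounded_linear_add bounded_linear_scaleR_right bounded_linear_sum
        bounded_linear_compose[OF adjoint_bounded_linear] bounded_linear_compose[OF Ri_bl] A_bl)
       (auto intro: A_bl)
  have trm: "adjoint (DF k qb) (inv R (DF k qb x)) \<bullet> z = DF k qb z \<bullet> inv R (DF k qb x)"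
    if "k \<in> {1..n}" for k x z
    using adjoint_hilbert[OF A_bl[OF that], of z "inv R (DF k qb x)"] by (simp add: inner_commute)
  have expand: "Hop DF R a qb n x \<bullet> z = a * (x \<bullet> z) + (\<Sum>k = 1..n. DF k qb z \<bullet> inv R (DF k qb x))" for x z
    unfolding Hop_def by (simp add: inner_add_left inner_sum_left trm)
  show "Hop DF R a qb n x \<bullet> z = x \<bullet> Hop DF R a qb n z" for x z
  proof -
    have "Hop DF R a qb n z \<bullet> x = a * (z \<bullet> x) + (\<Sum>k = 1..n. DF k qb x \<bullet> inv R (DF k qb z))"
      by (rule expand)
    also have "\<dots> = a * (x \<bullet> z) + (\<Sum>k = 1..n. DF k qb z \<bullet> inv R (DF k qb x))"
      by (intro arg_cong2[where f="(+)"] sum.cong refl) (simp_all add: inner_commute, metis Rf(3) inner_commute)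
    finally show ?thesis using expand[of x z] by (simp add: inner_commute)
  qed
  show "a * (norm x)^2 \<le> Hop DF R a qb n x \<bullet> x" for x
  proof -
    have "0 \<le> (\<Sum>k = 1..n. DF k qb x \<bullet> inv R (DF k qb x))"
      by (intro sum_nonneg) (metis Rf(4) inner_commute)
    then show ?thesis using expand[of x x] by (simp add: power2_norm_eq_inner)
  qed
qed

lemma kfl_inner_inv:
  fixes DF :: "nat \<Rightarrow> 'x::{real_inner,complete_space} \<Rightarrow> 'x \<Rightarrow> 'y::{real_inner,complete_space}"
  assumes A_bl: "\<And>k. k \<in> {1..N} \<Longrightarrow> bounded_linear (DF k qb)"
    and R_lin: "bounded_linear R"
    and R_sa: "\<And>v w. R v \<bullet> w = v \<bullet> R w"
    and R_pos: "\<And>v. v \<noteq> 0 \<Longrightarrow> R v \<bullet> v > 0" and bij: "bij R"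
    and Ri_bl: "bounded_linear (inv R)" and a: "a > 0"
  shows "n \<le> N \<Longrightarrow> (\<forall>v. Hop DF R a qb n (snd (KFL_inner F DF R u a qb n) v) = v) \<and>
     Hop DF R a qb n (fst (KFL_inner F DF R u a qb n) - qb) = (\<Sum>k = 1..n. adjoint (DF k qb) (inv R (u k - F k qb)))"
proof (induction n)
  case 0
  then show ?case using a by (simp add: Hop_def)
next
  case (Suc n)
  note Rf = Ri_facts[OF R_sa R_pos bij]
  have nN: "n \<le> N" using Suc.prems by simp
  have Abl: "\<And>k. k \<in> {1..m} \<Longrightarrow> bounded_linear (DF k qb)" if "m \<le> N" for m
    using A_bl that by auto
  note HP = Hop_props[where DF=DF and qb=qb and n=n and R=R and a=a, OF Abl[OF nN] R_sa R_pos bij Ri_bl]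
  note HP' = Hop_props[where DF=DF and qb=qb and n="Suc n" and R=R and a=a, OF Abl[OF Suc.prems] R_sa R_pos bij Ri_bl]
  obtain q B where qB: "KFL_inner F DF R u a qb n = (q, B)" by (cases "KFL_inner F DF R u a qb n")
  from Suc.IH[OF nN] qB have IH1: "\<And>v. Hop DF R a qb n (B v) = v"
    and IH2: "Hop DF R a qb n (q - qb) = (\<Sum>k = 1..n. adjoint (DF k qb) (inv R (u k - F k qb)))"
    by auto
  define A where "A = DF (Suc n) qb"
  have A: "bounded_linear A" unfolding A_def using A_bl Suc.prems by simp
  define K where "K = (\<lambda>y. B (adjoint A (inv (\<lambda>z. R z + A (B (adjoint A z))) y)))"
  have step: "KFL_inner F DF R u a qb (Suc n) =
     (q + K (u (Suc n) - F (Suc n) qb + A qb - A q), \<lambda>m. B m - K (A (B m)))"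
    by (simp add: qB Let_def K_def A_def)
  have HS: "Hop DF R a qb (Suc n) = (\<lambda>m. Hop DF R a qb n m + adjoint A (inv R (A m)))"
    by (simp add: Hop_def A_def fun_eq_iff algebra_simps)
  have lin: "linear (Hop DF R a qb n)" "linear A" "linear (adjoint A)" "linear (inv R)"
    using HP(1) A adjoint_bounded_linear[OF A] Ri_bl by (auto intro: bounded_linear.linear)
  have inj: "inj (Hop DF R a qb n)" by (rule coercive_inj[OF lin(1) a HP(3)])
  have surj: "surj (\<lambda>m. Hop DF R a qb n m + adjoint A (inv R (A m)))"
    unfolding HS[symmetric] by (rule coercive_surj[OF HP'(1) HP'(2) a HP'(3)])
  note ks = kalman_step[OF lin Rf(1) Rf(2) inj surj IH1]
  interpret A: bounded_linear A by fact
  define r where "r = u (Suc n) - F (Suc n) qb"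
  have arg: "u (Suc n) - F (Suc n) qb + A qb - A q = r - A (q - qb)"
    unfolding r_def by (simp add: A.diff)
  show ?case
  proof (intro conjI allI)
    fix v show "Hop DF R a qb (Suc n) (snd (KFL_inner F DF R u a qb (Suc n)) v) = v"
      unfolding step HS K_def using ks(1) by simp
  next
    have "Hop DF R a qb (Suc n) (fst (KFL_inner F DF R u a qb (Suc n)) - qb)
        = Hop DF R a qb (Suc n) ((q - qb) + K (r - A (q - qb)))"
      unfolding step arg by (simp add: algebra_simps)
    also have "\<dots> = Hop DF R a qb n (q - qb) + adjoint A (inv R r)"
      unfolding HS K_def using ks(2)[of "q - qb" r] by simp
    also have "\<dots> = (\<Sum>k = 1..Suc n. adjoint (DF k qb) (inv R (u k - F k qb)))"
      unfolding IH2 by (simp add: A_def r_def)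
    finally show "Hop DF R a qb (Suc n) (fst (KFL_inner F DF R u a qb (Suc n)) - qb)
        = (\<Sum>k = 1..Suc n. adjoint (DF k qb) (inv R (u k - F k qb)))" .
  qed
qed

lemma kfl_core:
  fixes DF :: "nat \<Rightarrow> 'x::{real_inner,complete_space} \<Rightarrow> 'x \<Rightarrow> 'y::{real_inner,complete_space}"
  assumes A_bl: "\<And>k. k \<in> {1..N} \<Longrightarrow> bounded_linear (DF k qb)"
    and R_lin: "bounded_linear R"
    and R_sa: "\<And>v w. R v \<bullet> w = v \<bullet> R w"
    and R_pos: "\<And>v. v \<noteq> 0 \<Longrightarrow> R v \<bullet> v > 0" and bij: "bij R"
    and Ri_bl: "bounded_linear (inv R)" and a: "a > 0"
  shows "fst (KFL_inner F DF R u a qb N) = FLM_step F DF R u N a qb"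
proof -
  note HP = Hop_props[where DF=DF and qb=qb and n=N and R=R and a=a, OF A_bl R_sa R_pos bij Ri_bl]
  have inj: "inj (Hop DF R a qb N)"
    by (rule coercive_inj[OF bounded_linear.linear[OF HP(1)] a HP(3)])
  have eq: "Hop DF R a qb N (fst (KFL_inner F DF R u a qb N) - qb)
       = (\<Sum>k = 1..N. adjoint (DF k qb) (inv R (u k - F k qb)))"
    using kfl_inner_inv[where DF=DF and qb=qb, OF A_bl R_lin R_sa R_pos bij Ri_bl a, of N] by simp
  have "FLM_step F DF R u N a qb = qb + inv (Hop DF R a qb N) (\<Sum>k = 1..N. adjoint (DF k qb) (inv R (u k - F k qb)))"
    unfolding FLM_step_def Hop_def ..
  also have "\<dots> = qb + (fst (KFL_inner F DF R u a qb N) - qb)"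
    unfolding eq[symmetric] using inj by simp
  finally show ?thesis by simp
qed

theorem theorem3p1:
  fixes F :: "nat \<Rightarrow> 'x::{real_inner,complete_space} \<Rightarrow> 'y::{real_inner,complete_space}"
    and DF :: "nat \<Rightarrow> 'x \<Rightarrow> 'x \<Rightarrow> 'y"
    and R :: "'y \<Rightarrow> 'y" and u :: "nat \<Rightarrow> 'y" and N :: nat
    and alpha :: "nat \<Rightarrow> real" and q0 :: 'x and D :: "'x set" and i :: nat
  assumes deriv: "\<And>n q. n \<in> {1..N} \<Longrightarrow> q \<in> D \<Longrightarrow> (F n has_derivative DF n q) (at q within D)"
    and R_lin: "bounded_linear R"
    and R_sa: "\<And>v w. R v \<bullet> w = v \<bullet> R w"
    and R_pos: "\<And>v. v \<noteq> 0 \<Longrightarrow> R v \<bullet> v > 0"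
    and R_inv: "bij R" "bounded_linear (inv R)"
    and alpha_pos: "\<And>j. alpha j > 0"
    and wd: "\<And>j. j \<le> i \<Longrightarrow> FLM F DF R u N alpha q0 j \<in> D"
            "\<And>j. j \<le> i \<Longrightarrow> KFL_start F DF R u N alpha q0 j \<in> D"
  shows "KFL_q F DF R u N alpha q0 i N = FLM F DF R u N alpha q0 (Suc i)"
proof -
  have core: "fst (KFL_inner F DF R u (alpha j) (KFL_start F DF R u N alpha q0 j) N)
      = FLM_step F DF R u N (alpha j) (KFL_start F DF R u N alpha q0 j)" if "j \<le> i" for j
    by (rule kfl_core[OF _ R_lin R_sa R_pos R_inv alpha_pos])
       (rule has_derivative_bounded_linear[OF deriv[OF _ wd(2)[OF that]]])
  have eq: "j \<le> i \<Longrightarrow> KFL_start F DF R u N alpha q0 j = FLM F DF R u N alpha q0 j" for j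
  proof (induction j)
    case 0 then show ?case by simp
  next
    case (Suc j)
    then have "j \<le> i" by simp
    then show ?case using core[of j] Suc by simp
  qed
  show ?thesis unfolding KFL_q_def using core[of i] eq[of i] by simp
qed

end
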